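(* Let $q\in\mathbb{C}\setminus\{0,1,-1\}$ and let $a,a^\dagger,N$ be operators satisfying $$aa^\dagger-q\,a^\dagger a=q^{-N},\qquad a^\dagger a=[N],\qquad [N,a]=-a,\qquad [N,a^\dagger]=a^\dagger,$$ where $[X]=\frac{q^{X}-q^{-X}}{q-q^{-1}}$. For $m\in\mathbb{Z}$ put $L_m=-q^{N}(a^\dagger)^{m+1}a$. Define brackets recursively: for $m,k\in\mathbb{Z}$, $$\llbracket L_m,L_k\rrbracket=q^{m-k}L_mL_k-q^{k-m}L_kL_m,$$ and for $n\ge 3$ and $i_1,\dots,i_n\in\mathbb{Z}$, $$\llbracket L_{i_1},\dots,L_{i_n}\rrbracket=\sum_{s=1}^{n}(-1)^{s+1}\,q^{x_n i_s+y_n\sum_{l\neq s}i_l}\,L_{i_s}\,\llbracket L_{i_1},\dots,\widehat{L_{i_s}},\dots,L_{i_n}\rrbracket,$$ where the hat denotes omission, the product on the right is the ordinary operator product, and $(x_3,y_3)=(2,-1)$, $(x_n,y_n)=(n,0)$ for even $n\ge4$, $(x_n,y_n)=(n-1,-2)$ for odd $n\ge5$. Then for every $n\ge 3$ and all $i_1,\dots,i_n\in\mathbb{Z}$, $$\llbracket L_{i_1},\dots,L_{i_n}\rrbracket=\frac{\mathrm{sign}(n)}{(q-q^{-1})^{n-1}}\det\Big(q^{2\left(r-\lfloor\frac{n-1}{2}\rfloor\right)i_j}\Big)_{0\le r\le n-1,\;1\le j\le n}\;L_{i_1+\cdots+i_n},$$ i.e. the rows of the $n\times n$ matrix have exponents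 $-2\lfloor\frac{n-1}{2}\rfloor i_j,\,2(-\lfloor\frac{n-1}{2}\rfloor+1)i_j,\dots,2\lfloor\frac n2\rfloor i_j$ in column $j$, where $\mathrm{sign}(n)=1$ if $n\equiv0,1\pmod 4$ and $\mathrm{sign}(n)=-1$ if $n\equiv 2,3\pmod 4$, and $\lfloor\cdot\rfloor$ is the floor function.
   Context: The operators $a,a^\dagger,N$ form a $q$-deformed oscillator. The two-entry bracket is the $q$-commutator $[A,B]_{(p,r)}=pAB-rBA$ with $(p,r)=(q^{m-k},q^{k-m})$; with it the $L_m$ satisfy $[L_m,L_k]_{(q^{m-k},q^{k-m})}=[m-k]L_{m+k}$ (the $q$-deformed Virasoro–Witt algebra). *)

theory Defs
  imports Complex_Main "Jordan_Normal_Form.Determinant"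
begin

text \<open>The operators live in an associative unital complex algebra, modelled as a
ring 'a together with a central unital ring embedding emb of the complex scalars.\<close>

definition scalar_embedding :: "(complex \<Rightarrow> 'a::ring_1) \<Rightarrow> bool" where
  "scalar_embedding emb \<longleftrightarrow>
     (\<forall>x y. emb (x + y) = emb x + emb y) \<and> (\<forall>x y. emb (x * y) = emb x * emb y) \<and>
     emb 1 = 1 \<and> (\<forall>c X. emb c * X = X * emb c)"

definition zpow :: "'a::ring_1 \<Rightarrow> 'a \<Rightarrow> int \<Rightarrow> 'a" where
  "zpow X Xi k = (if 0 \<le> k then X ^ nat k else Xi ^ nat (- k))"

text \<open>L_m = - q^N (a^dagger)^(m+1) a, where K stands for q^N.\<close>
definition Lop :: "'a::ring_1 \<Rightarrow> 'a \<Rightarrow> 'a \<Rightarrow> 'a \<Rightarrow> int \<Rightarrow> 'a" where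
  "Lop K ad adi a m = - (K * zpow ad adi (m + 1) * a)"

definition xcoef :: "nat \<Rightarrow> int" where
  "xcoef n = (if n = 3 then 2 else if even n then int n else int n - 1)"

definition ycoef :: "nat \<Rightarrow> int" where
  "ycoef n = (if n = 3 then -1 else if even n then 0 else -2)"

definition remove_nth :: "nat \<Rightarrow> 'b list \<Rightarrow> 'b list" where
  "remove_nth s xs = take s xs @ drop (Suc s) xs"

text \<open>qbr d: bracket of a list of length d+2 (recursion depth d).  The index s is
0-based, so (-1)^(s+1) for 1-based s becomes (-1)^s.\<close>
primrec qbr :: "nat \<Rightarrow> (complex \<Rightarrow> 'a::ring_1) \<Rightarrow> complex \<Rightarrow> (int \<Rightarrow> 'a) \<Rightarrow> int list \<Rightarrow> 'a" where
  "qbr 0 emb q L xs = (case xs of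
       [m, k] \<Rightarrow> emb (q powi (m - k)) * L m * L k - emb (q powi (k - m)) * L k * L m
     | _ \<Rightarrow> 0)"
| "qbr (Suc d) emb q L xs =
     (\<Sum>s<length xs. emb ((-1) ^ s * q powi (xcoef (length xs) * xs ! s
                                      + ycoef (length xs) * (sum_list xs - xs ! s)))
                     * L (xs ! s) * qbr d emb q L (remove_nth s xs))"

definition qbracket :: "(complex \<Rightarrow> 'a::ring_1) \<Rightarrow> complex \<Rightarrow> (int \<Rightarrow> 'a) \<Rightarrow> int list \<Rightarrow> 'a" where
  "qbracket emb q L xs = qbr (length xs - 2) emb q L xs"

definition sgn4 :: "nat \<Rightarrow> complex" where
  "sgn4 n = (if n mod 4 = 0 \<or> n mod 4 = 1 then 1 else -1)"

end

theory Submission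
  imports Defs
begin

definition vdet :: "complex list \<Rightarrow> complex" where
  "vdet zs = det (mat (length zs) (length zs) (\<lambda>(r,j). zs!j ^ r))"

lemma length_remove_nth[simp]: "s < length xs \<Longrightarrow> length (remove_nth s xs) = length xs - 1"
  by (simp add: remove_nth_def)

lemma nth_remove_nth: "s < length xs \<Longrightarrow> j < length xs - 1 \<Longrightarrow>
   remove_nth s xs ! j = xs ! (if j < s then j else Suc j)"
  by (auto simp: remove_nth_def nth_append min_def)

lemma remove_nth_map: "remove_nth s (map f xs) = map f (remove_nth s xs)"
  by (simp add: remove_nth_def take_map drop_map)

lemma sum_list_remove_nth: "s < length (xs::int list) \<Longrightarrow> sum_list (remove_nth s xs) = sum_list xs - xs ! s"
proof -
  assume s: "s < length xs"
  have "sum_list xs = sum_list (take s xs @ xs!s # drop (Suc s) xs)"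
    using id_take_nth_drop[OF s] by simp
  thus ?thesis by (simp add: remove_nth_def)
qed

lemma laplace_vdet:
  assumes len: "length zs = Suc m" and p: "p \<le> m"
  shows "(\<Sum>s<Suc m. (-1)^s * zs!s ^ p * vdet (remove_nth s zs)) = (if p = m then (-1)^m * vdet zs else 0)"
proof -
  define B where "B = mat (Suc m) (Suc m) (\<lambda>(r,j). zs!j ^ (if r = m then p else r))"
  have Bc: "B \<in> carrier_mat (Suc m) (Suc m)" by (simp add: B_def)
  have del: "mat_delete B m s = mat m m (\<lambda>(r,j). (remove_nth s zs)!j ^ r)" if s: "s < Suc m" for s
    using s len by (auto simp: mat_delete_def B_def nth_remove_nth intro!: eq_matI)
  have "det B = (\<Sum>s<Suc m. B $$ (m,s) * cofactor B m s)"
    by (rule laplace_expansion_row[OF Bc], simp)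
  also have "\<dots> = (\<Sum>s<Suc m. (-1)^m * ((-1)^s * zs!s ^ p * vdet (remove_nth s zs)))"
  proof (rule sum.cong[OF refl])
    fix s assume "s \<in> {..<Suc m}"
    hence s: "s < Suc m" by simp
    have "B $$ (m,s) = zs!s ^ p" using s by (simp add: B_def)
    thus "B $$ (m,s) * cofactor B m s = (-1)^m * ((-1)^s * zs!s ^ p * vdet (remove_nth s zs))"
      using len s by (simp add: cofactor_def del vdet_def power_add)
  qed
  also have "\<dots> = (-1)^m * (\<Sum>s<Suc m. (-1)^s * zs!s ^ p * vdet (remove_nth s zs))"
    by (rule sum_distrib_left[symmetric])
  finally have eq: "det B = (-1)^m * (\<Sum>s<Suc m. (-1)^s * zs!s ^ p * vdet (remove_nth s zs))" .
  have mm: "((-1::complex)^m) * (-1)^m = 1" by (simp add: power_add[symmetric])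
  show ?thesis
  proof (cases "p = m")
    case True
    have "B = mat (length zs) (length zs) (\<lambda>(r,j). zs!j ^ r)"
      using len True by (auto simp: B_def intro!: eq_matI)
    hence "det B = vdet zs" by (simp add: vdet_def)
    with eq True show ?thesis
      by (metis (no_types, lifting) mm mult.assoc mult_1)
  next
    case False
    have "det B = 0"
      apply (rule det_identical_rows[OF Bc, of p m])
      using False p by (auto simp: B_def intro!: eq_vecI)
    with eq False show ?thesis by simp
  qed
qed

lemma vdet_Nil: "vdet [] = 1" by (simp add: vdet_def)

lemma vdet_single: "vdet [w] = 1"
  using laplace_vdet[of "[w]" 0 0] by (simp add: remove_nth_def vdet_Nil)

lemma vdet_two: "vdet [u, v] = v - u"
proof -
  have "(\<Sum>s<Suc 1. (-1)^s * [u,v]!s ^ 1 * vdet (remove_nth s [u,v])) = (-1)^1 * vdet [u,v]"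
    using laplace_vdet[of "[u,v]" 1 1] by simp
  hence "u - v = - vdet [u,v]" by (simp add: remove_nth_def vdet_single)
  thus ?thesis by (metis minus_diff_eq minus_minus)
qed

lemma det_col_scale:
  "det (mat n n (\<lambda>(r,j). c j * f r j)) = (\<Prod>j<n. c j) * det (mat n n (\<lambda>(r,j). f r j))"
proof -
  have "det (mat n n (\<lambda>(r,j). c j * f r j)) =
     (\<Sum>p\<in>{p. p permutes {0..<n}}. signof p * (\<Prod>i=0..<n. c (p i) * f i (p i)))"
    by (subst det_def'[of _ n], simp, rule sum.cong, auto intro!: prod.cong dest: permutes_in_image)
  also have "\<dots> = (\<Sum>p\<in>{p. p permutes {0..<n}}. (\<Prod>j<n. c j) * (signof p * (\<Prod>i=0..<n. f i (p i))))"
  proof (rule sum.cong[OF refl])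
    fix p assume "p \<in> {p. p permutes {0..<n}}"
    hence p: "p permutes {0..<n}" by simp
    have "(\<Prod>i=0..<n. c (p i)) = (\<Prod>j=0..<n. c j)"
      using prod.reindex_bij_betw[OF permutes_imp_bij[OF p], of c] .
    thus "signof p * (\<Prod>i=0..<n. c (p i) * f i (p i)) = (\<Prod>j<n. c j) * (signof p * (\<Prod>i=0..<n. f i (p i)))"
      by (simp add: prod.distrib atLeast0LessThan)
  qed
  also have "\<dots> = (\<Prod>j<n. c j) * det (mat n n (\<lambda>(r,j). f r j))"
    by (subst det_def'[of _ n], simp, subst sum_distrib_left, rule sum.cong, auto intro!: prod.cong dest: permutes_in_image)
  finally show ?thesis .
qed

lemma prod_powi_sum: "(q::complex) \<noteq> 0 \<Longrightarrow> (\<Prod>j<length xs. q powi (c * xs!j)) = q powi (c * sum_list xs)"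
proof (induction xs)
  case Nil then show ?case by simp
next
  case (Cons x xs)
  have "(\<Prod>j<length (x#xs). q powi (c * (x#xs)!j)) = q powi (c*x) * (\<Prod>j<length xs. q powi (c * xs!j))"
    unfolding length_Cons prod.lessThan_Suc_shift by simp
  also have "\<dots> = q powi (c*x + c * sum_list xs)" using Cons by (simp add: power_int_add)
  finally show ?case by (simp add: algebra_simps)
qed

definition zq :: "complex \<Rightarrow> int \<Rightarrow> complex" where "zq q i = q powi (2*i)"
definition ee :: "nat \<Rightarrow> int" where "ee n = (if n = 2 then 1 else 2 * int ((n-1) div 2))"
definition sg :: "nat \<Rightarrow> complex" where "sg n = (if n = 2 then -1 else sgn4 n)"
definition CC :: "complex \<Rightarrow> int list \<Rightarrow> complex" where
  "CC q xs = sg (length xs) / (q - 1/q)^(length xs - 1) * q powi (- ee (length xs) * sum_list xs)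
      * vdet (map (zq q) xs)"

lemma sg_step: "n \<ge> 3 \<Longrightarrow> sg n = sg (n-1) * (-1)^(n-1)"
proof -
  assume n: "n \<ge> 3"
  show ?thesis
  proof (cases "n = 3")
    case True then show ?thesis by (simp add: sg_def sgn4_def)
  next
    case False
    then obtain m where nm: "n = Suc m" and m3: "m \<ge> 3" using n by (cases n) auto
    define r where "r = m mod 4"
    have mr: "m = 4 * (m div 4) + r" unfolding r_def by simp
    have r4: "r < 4" unfolding r_def by simp
    have ev: "even m \<longleftrightarrow> even r" by (subst mr) simp
    have m1: "(-1::complex)^m = (if even r then 1 else -1)" using ev by (simp add: minus_one_power_iff)
    have sm: "Suc m mod 4 = (if r = 3 then 0 else Suc r)" unfolding r_def by (simp add: mod_Suc)
    have A: "sg (Suc m) = sgn4 (Suc m)" "sg m = sgn4 m" using nm m3 by (simp_all add: sg_def)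
    have "r = 0 \<or> r = 1 \<or> r = 2 \<or> r = 3" using r4 by arith
    then show ?thesis unfolding nm diff_Suc_1 A using m1 sm r_def[symmetric]
      by (elim disjE) (simp_all add: sgn4_def)
  qed
qed
lemma exp_step:
  assumes n: "n \<ge> 3"
  shows "xcoef n * i + ycoef n * (S - i) + (- ee (n-1) * (S - i)) = - ee n * S + 2 * i * int (n-1)"
proof (cases "n = 3")
  case True
  have "xcoef n = 2" "ycoef n = -1" "ee (n-1) = 1" "ee n = 2" "int (n-1) = 2"
    using True by (simp_all add: xcoef_def ycoef_def ee_def)
  then show ?thesis by (simp only:) (simp add: algebra_simps)
next
  case False
  show ?thesis
  proof (cases "even n")
    case True
    then obtain k where k: "n = 2*k" by blast
    have k2: "k \<ge> 2" using n False k by simp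
    have d1: "(n-1-1) div 2 = k - 1" "(n-1) div 2 = k - 1" using k k2 by presburger+
    have ne: "n - 1 \<noteq> 2" "n \<noteq> 2" "n \<noteq> 3" using n False k by presburger+
    have "xcoef n = 2 * int k" "ycoef n = 0" 
      using True ne k unfolding xcoef_def ycoef_def by simp_all
    moreover have "ee (n-1) = 2 * (int k - 1)" "ee n = 2 * (int k - 1)"
      using ne d1 k2 unfolding ee_def by simp_all
    moreover have "int (n-1) = 2 * int k - 1" using k k2 by simp
    ultimately show ?thesis by (simp only:) (simp add: algebra_simps)
  next
    case False2: False
    then obtain k where k: "n = 2*k+1" using oddE by blast
    have k2: "k \<ge> 2" using n False k by simp
    have d1: "(n-1-1) div 2 = k - 1" "(n-1) div 2 = k" using k k2 by presburger+
    have ne: "n - 1 \<noteq> 2" "n \<noteq> 2" "n \<noteq> 3" "n - 1 \<noteq> 3" using n False k by presburger+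
    have "xcoef n = 2 * int k" "ycoef n = -2" 
      using False2 ne k unfolding xcoef_def ycoef_def by simp_all
    moreover have "ee (n-1) = 2 * (int k - 1)" "ee n = 2 * int k"
      using ne d1 k2 unfolding ee_def by simp_all
    moreover have "int (n-1) = 2 * int k" using k k2 by simp
    ultimately show ?thesis by (simp only:) (simp add: algebra_simps)
  qed
qed

lemma step_sums:
  fixes q :: complex and xs :: "int list"
  assumes q0: "q \<noteq> 0" and d0: "q - 1/q \<noteq> 0" and n: "length xs \<ge> 3"
  shows "(\<Sum>s<length xs. (-1)^s * q powi (xcoef (length xs) * xs!s + ycoef (length xs) * (sum_list xs - xs!s))
            * CC q (remove_nth s xs) * q powi (-2 * xs!s)) = 0"
    and "(\<Sum>s<length xs. (-1)^s * q powi (xcoef (length xs) * xs!s + ycoef (length xs) * (sum_list xs - xs!s))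
            * CC q (remove_nth s xs)) = (q - 1/q) * CC q xs"
proof -
  define n where "n = length xs"
  define S where "S = sum_list xs"
  define d where "d = q - 1/q"
  define zs where "zs = map (zq q) xs"
  obtain m where nm: "n = Suc m" and m2: "m \<ge> 2" using n unfolding n_def
    by (metis Suc_le_D Suc_le_mono eval_nat_numeral(3))
  define K0 where "K0 = sg (n-1) / d^(n-2) * q powi (- ee n * S)"
  define t where "t = (\<lambda>s. (-1)^s * q powi (xcoef n * xs!s + ycoef n * (S - xs!s)) * CC q (remove_nth s xs))"
  have lzs: "length zs = Suc m" using nm by (simp add: zs_def n_def)
  have tE: "t s = K0 * ((-1)^s * zs!s ^ m * vdet (remove_nth s zs))" if s: "s < n" for s
  proof -
    have CCr: "CC q (remove_nth s xs) = sg (n-1) / d^(n-2) * q powi (- ee (n-1) * (S - xs!s))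
               * vdet (remove_nth s zs)"
      using s by (simp add: CC_def n_def S_def d_def zs_def sum_list_remove_nth remove_nth_map numeral_2_eq_2)
    have "q powi (xcoef n * xs!s + ycoef n * (S - xs!s)) * q powi (- ee (n-1) * (S - xs!s))
          = q powi (xcoef n * xs!s + ycoef n * (S - xs!s) + (- ee (n-1) * (S - xs!s)))"
      by (rule power_int_add[symmetric]) (simp add: q0)
    also have "\<dots> = q powi (- ee n * S + 2 * xs!s * int (n-1))"
      using exp_step[of n "xs!s" S] n by (simp add: n_def)
    also have "\<dots> = q powi (- ee n * S) * q powi (2 * xs!s * int m)"
      by (subst power_int_add) (simp_all add: q0 nm)
    also have "\<dots> = q powi (- ee n * S) * zs!s ^ m"
      using s nm by (simp add: zs_def zq_def n_def power_int_power')
    finally have pp: "q powi (xcoef n * xs!s + ycoef n * (S - xs!s)) * q powi (- ee (n-1) * (S - xs!s))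
          = q powi (- ee n * S) * zs!s ^ m" .
    show ?thesis unfolding t_def CCr K0_def using pp
      by (simp add: algebra_simps)
  qed
  have zinv: "zs!s * q powi (-2 * xs!s) = 1" if s: "s < n" for s
  proof -
    have "q powi (2 * xs!s) \<noteq> 0" using q0 by (simp add: power_int_not_zero)
    moreover have "q powi (-2 * xs!s) = inverse (q powi (2 * xs!s))"
      using power_int_minus[of q "2 * xs!s"] by simp
    ultimately show ?thesis using s by (simp add: zs_def zq_def n_def)
  qed
  have t2: "t s * q powi (-2 * xs!s) = K0 * ((-1)^s * zs!s ^ (m-1) * vdet (remove_nth s zs))" if s: "s < n" for s
  proof -
    have "zs!s ^ m = zs!s ^ (m-1) * zs!s" using m2 by (simp add: power_Suc2[symmetric])
    hence "zs!s ^ m * q powi (-2 * xs!s) = zs!s ^ (m-1)" using zinv[OF s] by (simp add: mult.assoc)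
    thus ?thesis unfolding tE[OF s] by (simp add: mult.assoc mult.left_commute)
  qed
  have "(\<Sum>s<n. t s * q powi (-2 * xs!s)) = K0 * (\<Sum>s<Suc m. (-1)^s * zs!s ^ (m-1) * vdet (remove_nth s zs))"
    unfolding sum_distrib_left nm by (rule sum.cong[OF refl], rule t2, simp add: nm)
  also have "\<dots> = 0" using laplace_vdet[OF lzs, of "m-1"] m2 by simp
  finally show "(\<Sum>s<length xs. (-1)^s * q powi (xcoef (length xs) * xs!s + ycoef (length xs) * (sum_list xs - xs!s))
            * CC q (remove_nth s xs) * q powi (-2 * xs!s)) = 0"
    by (simp add: t_def n_def S_def)
  have "(\<Sum>s<n. t s) = K0 * (\<Sum>s<Suc m. (-1)^s * zs!s ^ m * vdet (remove_nth s zs))"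
    unfolding sum_distrib_left nm by (rule sum.cong[OF refl], rule tE, simp add: nm)
  also have "\<dots> = K0 * ((-1)^m * vdet zs)" using laplace_vdet[OF lzs, of m] by simp
  also have "\<dots> = d * CC q xs"
  proof -
    have sgs: "sg n = sg m * (-1)^m" using sg_step[of n] n nm by (simp add: n_def)
    have dm: "d^m = d * d^(m-1)" using m2 by (simp add: power_Suc[symmetric])
    have e0: "d^(m-1) \<noteq> 0" using d0 by (simp add: d_def)
    have d0': "d \<noteq> 0" using d0 by (simp add: d_def)
    have aux: "\<And>a s P V. (a::complex)/d^(m-1) * P * (s * V) = d * (a * s / (d * d^(m-1)) * P * V)"
      using e0 d0' by (simp add: field_simps)
    have "CC q xs = sg m * (-1)^m / (d * d^(m-1)) * q powi (- ee n * S) * vdet zs"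
      unfolding CC_def using nm sgs dm by (simp add: n_def[symmetric] S_def[symmetric] zs_def[symmetric] d_def[symmetric])
    moreover have "K0 = sg m / d^(m-1) * q powi (- ee n * S)" unfolding K0_def using nm by simp
    ultimately show ?thesis using aux by simp
  qed
  finally show "(\<Sum>s<length xs. (-1)^s * q powi (xcoef (length xs) * xs!s + ycoef (length xs) * (sum_list xs - xs!s))
            * CC q (remove_nth s xs)) = (q - 1/q) * CC q xs"
    by (simp add: t_def n_def S_def d_def)
qed


definition sm :: "(complex \<Rightarrow> 'a::ring_1) \<Rightarrow> complex \<Rightarrow> 'a \<Rightarrow> 'a" where
  "sm emb c X = emb c * X"

locale qosc =
  fixes emb :: "complex \<Rightarrow> 'a::ring_1" and q :: complex and a ad adi K Kinv :: 'a
  assumes emb: "scalar_embedding emb"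
    and q0: "q \<noteq> 0" and q1: "q \<noteq> 1" and qm1: "q \<noteq> -1"
    and KKi: "K * Kinv = 1" and KiK: "Kinv * K = 1"
    and adadi: "ad * adi = 1" and adiad: "adi * ad = 1"
    and rel1: "a * ad - emb q * ad * a = Kinv"
    and rel2: "ad * a = emb (1 / (q - 1 / q)) * (K - Kinv)"
    and rel3: "K * a = emb (1 / q) * a * K"
    and rel4: "K * ad = emb q * ad * K"
begin

abbreviation "S c X \<equiv> sm emb c X"
abbreviation "Z j \<equiv> zpow ad adi j"
abbreviation "L \<equiv> Lop K ad adi a"
abbreviation "dd \<equiv> q - 1/q"

lemma emb_add: "emb (x + y) = emb x + emb y" using emb unfolding scalar_embedding_def by blast
lemma emb_mult: "emb (x * y) = emb x * emb y" using emb unfolding scalar_embedding_def by blast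
lemma emb_1: "emb 1 = 1" using emb unfolding scalar_embedding_def by blast
lemma emb_comm: "emb c * X = X * emb c" using emb unfolding scalar_embedding_def by blast
lemma emb_0: "emb 0 = 0"
  using emb_add[of 0 0] by simp
lemma emb_neg: "emb (- x) = - emb x"
  using emb_add[of "-x" x] emb_0 by (simp add: eq_neg_iff_add_eq_0)
lemma emb_diff: "emb (x - y) = emb x - emb y"
  using emb_add[of x "-y"] emb_neg[of y] by simp

lemma sm_left[simp]: "S c X * Y = S c (X * Y)" by (simp add: sm_def mult.assoc)
lemma sm_right[simp]: "X * S c Y = S c (X * Y)"
  unfolding sm_def by (simp only: mult.assoc[symmetric] emb_comm[of c X])
lemma sm_sm[simp]: "S c (S c' X) = S (c * c') X" by (simp add: sm_def emb_mult mult.assoc)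
lemma sm_1[simp]: "S 1 X = X" by (simp add: sm_def emb_1)
lemma sm_0[simp]: "S 0 X = 0" by (simp add: sm_def emb_0)
lemma sm_X0[simp]: "S c 0 = 0" by (simp add: sm_def)
lemma sm_add: "S c (X + Y) = S c X + S c Y" by (simp add: sm_def distrib_left)
lemma sm_diff: "S c (X - Y) = S c X - S c Y" by (simp add: sm_def algebra_simps)
lemma sm_minus[simp]: "S c (- X) = - S c X" by (simp add: sm_def)
lemma sm_cadd: "S (c + c') X = S c X + S c' X" by (simp add: sm_def emb_add distrib_right)
lemma sm_cdiff: "S (c - c') X = S c X - S c' X" by (simp add: sm_def emb_diff algebra_simps)

lemma sm_sum: "(\<Sum>s\<in>A. S (f s) X) = S (\<Sum>s\<in>A. f s) X"
proof (induction A rule: infinite_finite_induct)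
  case (insert x F) then show ?case by (simp add: sm_cadd)
qed simp_all

lemma sum_sm_diff: "(\<Sum>s\<in>A. S (f s) X - S (g s) Y) = S (\<Sum>s\<in>A. f s) X - S (\<Sum>s\<in>A. g s) Y"
  by (simp add: sum_subtractf sm_sum)

lemma KKi'[simp]: "K * (Kinv * Y) = Y" by (simp add: mult.assoc[symmetric] KKi)
lemma aK: "a * K = S q (K * a)"
proof -
  have "K * a = S (1/q) (a * K)" using rel3 by (simp add: sm_def mult.assoc)
  hence "S q (K * a) = S (q * (1/q)) (a * K)" by simp
  thus ?thesis using q0 by simp
qed
lemma adK: "ad * K = S (1/q) (K * ad)"
proof -
  have "K * ad = S q (ad * K)" using rel4 by (simp add: sm_def mult.assoc)
  hence "S (1/q) (K * ad) = S ((1/q) * q) (ad * K)" by simp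
  thus ?thesis using q0 by simp
qed
lemma adiK: "adi * K = S q (K * adi)"
proof -
  have "adi * (ad * K) * adi = K * adi" by (simp add: mult.assoc[symmetric] adiad)
  also have "adi * (ad * K) * adi = S (1/q) (adi * K)" by (simp add: adK mult.assoc adadi)
  finally have "S q (S (1/q) (adi * K)) = S q (K * adi)" by simp
  thus ?thesis using q0 by simp
qed
lemma adKi: "ad * Kinv = S q (Kinv * ad)"
proof -
  have "Kinv * (K * ad) * Kinv = ad * Kinv" by (simp add: mult.assoc[symmetric] KiK)
  also have "K * ad = S q (ad * K)" using rel4 by (simp add: sm_def mult.assoc)
  hence "Kinv * (K * ad) * Kinv = S q (Kinv * ad)" by (simp add: mult.assoc KKi)
  finally show ?thesis by simp
qed
lemma adiKi: "adi * Kinv = S (1/q) (Kinv * adi)"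
proof -
  have "Kinv * (K * adi) * Kinv = adi * Kinv" by (simp add: mult.assoc[symmetric] KiK)
  also have "K * adi = S (1/q) (adi * K)"
  proof -
    have "S (1/q) (adi * K) = S ((1/q) * q) (K * adi)" by (simp add: adiK)
    thus ?thesis using q0 by simp
  qed
  finally have "S (1/q) (Kinv * adi * K * Kinv) = adi * Kinv" by (simp add: mult.assoc)
  thus ?thesis by (simp add: mult.assoc KKi)
qed

lemma Z_succ: "Z (j + 1) = ad * Z j"
proof (cases "j \<ge> 0")
  case True
  then have "nat (j+1) = Suc (nat j)" by simp
  then show ?thesis using True by (simp add: zpow_def)
next
  case False
  then have "nat (- j) = Suc (nat (-(j+1)))" by simp
  then show ?thesis using False
    by (cases "j = -1") (simp_all add: zpow_def mult.assoc[symmetric] adadi)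
qed
lemma Z_pred: "Z (j - 1) = adi * Z j"
proof -
  have "Z j = ad * Z (j - 1)" using Z_succ[of "j-1"] by simp
  hence "adi * Z j = (adi * ad) * Z (j - 1)" by (simp add: mult.assoc)
  thus ?thesis by (simp add: adiad)
qed
lemma Z_0[simp]: "Z 0 = 1" by (simp add: zpow_def)

lemma Z_add: "Z i * Z j = Z (i + j)"
proof (induction i rule: int_induct[where k=0])
  case base then show ?case by simp
next
  case (step1 i)
  have "Z (i + 1) * Z j = ad * (Z i * Z j)" by (simp add: Z_succ mult.assoc)
  also have "\<dots> = Z (i + j + 1)" using step1 by (simp add: Z_succ)
  finally show ?case by (simp add: algebra_simps)
next
  case (step2 i)
  have "Z (i - 1) * Z j = adi * (Z i * Z j)" by (simp add: Z_pred mult.assoc)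
  also have "\<dots> = Z (i + j - 1)" using step2 by (simp add: Z_pred)
  finally show ?case by (simp add: algebra_simps)
qed

lemma powi_s: "q powi (j + 1) = q powi j * q" using q0 by (simp add: power_int_add_1)
lemma powi_p: "q powi (j - 1) = q powi j * (1/q)"
  using q0 power_int_diff[of q j 1] by (simp add: field_simps)

lemma ZK: "Z j * K = S (q powi (-j)) (K * Z j)"
proof (induction j rule: int_induct[where k=0])
  case base then show ?case by simp
next
  case (step1 i)
  have "Z (i + 1) * K = ad * (Z i * K)" by (simp add: Z_succ mult.assoc)
  also have "\<dots> = S (q powi (-i) * (1/q)) (K * Z (i+1))"
    using step1 by (simp add: mult.assoc[symmetric] adK) (simp add: mult.assoc Z_succ)
  also have "q powi (-i) * (1/q) = q powi (- (i + 1))" using powi_p[of "-i"] by simp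
  finally show ?case .
next
  case (step2 i)
  have "Z (i - 1) * K = adi * (Z i * K)" by (simp add: Z_pred mult.assoc)
  also have "\<dots> = S (q powi (-i) * q) (K * Z (i - 1))"
    using step2 by (simp add: mult.assoc[symmetric] adiK) (simp add: mult.assoc Z_pred)
  also have "q powi (-i) * q = q powi (- (i - 1))" using powi_s[of "-i"] by simp
  finally show ?case .
qed

lemma ZKi: "Z j * Kinv = S (q powi j) (Kinv * Z j)"
proof (induction j rule: int_induct[where k=0])
  case base then show ?case by simp
next
  case (step1 i)
  have "Z (i + 1) * Kinv = ad * (Z i * Kinv)" by (simp add: Z_succ mult.assoc)
  also have "\<dots> = S (q powi i * q) (Kinv * Z (i+1))"
    using step1 by (simp add: mult.assoc[symmetric] adKi) (simp add: mult.assoc Z_succ)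
  also have "q powi i * q = q powi (i + 1)" using powi_s[of "i"] by simp
  finally show ?case .
next
  case (step2 i)
  have "Z (i - 1) * Kinv = adi * (Z i * Kinv)" by (simp add: Z_pred mult.assoc)
  also have "\<dots> = S (q powi i * (1/q)) (Kinv * Z (i - 1))"
    using step2 by (simp add: mult.assoc[symmetric] adiKi) (simp add: mult.assoc Z_pred)
  also have "q powi i * (1/q) = q powi (i - 1)" using powi_p[of "i"] by simp
  finally show ?case .
qed

lemma aad: "a * ad = S (q/dd) K + S (1 - q/dd) Kinv"
proof -
  have "a * ad = S q (ad * a) + Kinv" using rel1 by (simp add: sm_def algebra_simps)
  also have "ad * a = S (1/dd) (K - Kinv)" using rel2 by (simp add: sm_def)
  finally show ?thesis by (simp add: sm_diff sm_cdiff)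
qed


lemma dd0: "dd \<noteq> 0"
proof
  assume "dd = 0"
  hence "q * q = 1" using q0 by (simp add: field_simps)
  hence "(q - 1) * (q + 1) = 0" by (simp add: algebra_simps)
  hence "q - 1 = 0 \<or> q + 1 = 0" by simp
  moreover have "q + 1 = 0 \<Longrightarrow> q = -1" by (simp add: eq_neg_iff_add_eq_0)
  ultimately show False using q1 qm1 by auto
qed

lemma Lprod: "L m * L k = S (1/dd) (L (m+k)) - S (q powi (-2*m) / dd) (K * (K * L (m+k)))"
proof -
  define V where "V = Z (m+k+1) * a"
  define W where "W = Z k * a"
  have L_def': "L j = - (K * (Z (j+1) * a))" for j by (simp add: Lop_def mult.assoc)
  have ZW: "Z (m+1) * W = V" unfolding W_def V_def by (simp add: mult.assoc[symmetric] Z_add algebra_simps)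
  have aK': "a * (K * Y) = S q (K * (a * Y))" for Y by (simp add: mult.assoc[symmetric] aK)
  have ZK': "Z j * (K * Y) = S (q powi (-j)) (K * (Z j * Y))" for j Y by (simp add: mult.assoc[symmetric] ZK)
  have ZKi': "Z j * (Kinv * Y) = S (q powi j) (Kinv * (Z j * Y))" for j Y by (simp add: mult.assoc[symmetric] ZKi)
  have aZa: "a * (Z (k+1) * a) = S (q/dd) (K * W) + S (1 - q/dd) (Kinv * W)"
  proof -
    have "a * (Z (k+1) * a) = (a * ad) * W" by (simp add: Z_succ W_def mult.assoc)
    also have "\<dots> = S (q/dd) (K * W) + S (1 - q/dd) (Kinv * W)" by (simp add: aad distrib_right)
    finally show ?thesis .
  qed
  have "L m * L k = K * (Z (m+1) * (a * (K * (Z (k+1) * a))))"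
    by (simp add: L_def' mult.assoc)
  also have "\<dots> = S (q * q powi (-(m+1))) (K * (K * (Z (m+1) * (a * (Z (k+1) * a)))))"
    by (simp add: aK' ZK')
  also have "\<dots> = S (q * q powi (-(m+1)) * (q/dd) * q powi (-(m+1))) (K * (K * (K * V)))
                 + S (q * q powi (-(m+1)) * (1 - q/dd) * q powi (m+1)) (K * V)"
    by (simp add: aZa distrib_left sm_add ZK' ZKi' ZW mult.assoc)
  also have "q * q powi (-(m+1)) * (q/dd) * q powi (-(m+1)) = q powi (-2*m) / dd"
  proof -
    have "q powi (-(m+1)) * q powi (-(m+1)) = q powi (-2*m) * q powi (-2)"
      using q0 by (simp add: power_int_add[symmetric] algebra_simps)
    moreover have "q powi (-2) * q * q = 1" using q0 by (simp add: power_int_minus field_simps power2_eq_square)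
    ultimately show ?thesis by (simp add: field_simps)
  qed
  also have "q * q powi (-(m+1)) * (1 - q/dd) * q powi (m+1) = - (1/dd)"
  proof -
    have "q powi (-(m+1)) * q powi (m+1) = 1" using q0 power_int_add[of q "-(m+1)" "m+1"] by simp
    moreover have "q * (1 - q/dd) = - (1/dd)" using dd0 q0 by (simp add: field_simps)
    ultimately show ?thesis by (metis mult.commute mult.left_commute mult_1)
  qed
  finally have lhs: "L m * L k = S (q powi (-2*m) / dd) (K * (K * (K * V))) + S (- (1/dd)) (K * V)" .
  have LV: "L (m+k) = - (K * V)" unfolding V_def by (simp add: L_def')
  show ?thesis unfolding lhs LV by (simp add: sm_def emb_neg algebra_simps)
qed


lemma comb2: "c1 * e1 = c2 * e2 \<Longrightarrow> S c1 (S u X - S e1 Y) - S c2 (S u X - S e2 Y) = S ((c1 - c2) * u) X"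
  by (simp add: sm_diff left_diff_distrib sm_cdiff algebra_simps)

lemma CC2: "CC q [m, k] = (q powi (m - k) - q powi (k - m)) * (1 / dd)"
proof -
  have e1: "q powi (- (m + k)) * q powi (2 * k) = q powi (k - m)"
    using q0 power_int_add[of q "-(m+k)" "2*k", symmetric] by (simp add: algebra_simps)
  have e2: "q powi (- (m + k)) * q powi (2 * m) = q powi (m - k)"
    using q0 power_int_add[of q "-(m+k)" "2*m", symmetric] by (simp add: algebra_simps)
  have "CC q [m, k] = - (1/dd) * (q powi (- (m + k)) * q powi (2 * k) - q powi (- (m + k)) * q powi (2 * m))"
    by (simp add: CC_def sg_def ee_def vdet_two zq_def algebra_simps)
  also have "\<dots> = (q powi (m - k) - q powi (k - m)) * (1 / dd)" unfolding e1 e2 by (simp add: algebra_simps)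
  finally show ?thesis .
qed

lemma main: "length xs = d + 2 \<Longrightarrow> qbr d emb q L xs = S (CC q xs) (L (sum_list xs))"
proof (induction d arbitrary: xs)
  case 0
  then obtain m k where xs: "xs = [m, k]"
    by (cases xs; cases "tl xs") auto
  have "qbr 0 emb q L xs = S (q powi (m - k)) (L m * L k) - S (q powi (k - m)) (L k * L m)"
    by (simp add: xs sm_def mult.assoc)
  also have "\<dots> = S (q powi (m - k)) (S (1/dd) (L (m+k)) - S (q powi (-2*m) / dd) (K * (K * L (m+k))))
                 - S (q powi (k - m)) (S (1/dd) (L (m+k)) - S (q powi (-2*k) / dd) (K * (K * L (m+k))))"
    by (simp add: Lprod add.commute)
  also have "\<dots> = S ((q powi (m - k) - q powi (k - m)) * (1/dd)) (L (m+k))"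
  proof (rule comb2)
    have "q powi (m - k) * q powi (-2*m) = q powi (-(m+k))"
      using q0 power_int_add[of q "m-k" "-2*m", symmetric] by (simp add: algebra_simps)
    moreover have "q powi (k - m) * q powi (-2*k) = q powi (-(m+k))"
      using q0 power_int_add[of q "k-m" "-2*k", symmetric] by (simp add: algebra_simps)
    ultimately show "q powi (m - k) * (q powi (- 2 * m) / dd) = q powi (k - m) * (q powi (- 2 * k) / dd)"
      by (metis times_divide_eq_right)
  qed
  finally show ?case by (simp add: xs CC2)
next
  case (Suc d)
  define n where "n = length xs"
  define S0 where "S0 = sum_list xs"
  have n3: "n \<ge> 3" using Suc.prems by (simp add: n_def)
  define cf where "cf = (\<lambda>s. (-1)^s * q powi (xcoef n * xs!s + ycoef n * (S0 - xs!s)) * CC q (remove_nth s xs))"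
  have tm: "emb ((-1)^s * q powi (xcoef n * xs!s + ycoef n * (S0 - xs!s))) * L (xs!s)
       * qbr d emb q L (remove_nth s xs)
     = S (cf s / dd) (L S0) - S (cf s * q powi (-2 * xs!s) / dd) (K * (K * L S0))" if s: "s < n" for s
  proof -
    have IH: "qbr d emb q L (remove_nth s xs) = S (CC q (remove_nth s xs)) (L (S0 - xs!s))"
      using Suc.IH[of "remove_nth s xs"] Suc.prems s by (simp add: n_def S0_def sum_list_remove_nth)
    have LL: "L (xs!s) * L (S0 - xs!s) = S (1/dd) (L S0) - S (q powi (-2 * xs!s) / dd) (K * (K * L S0))"
      using Lprod[of "xs!s" "S0 - xs!s"] by simp
    define c where "c = (-1)^s * q powi (xcoef n * xs!s + ycoef n * (S0 - xs!s))"
    have "emb c * L (xs!s) * S (CC q (remove_nth s xs)) (L (S0 - xs!s))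
        = S c (L (xs!s) * S (CC q (remove_nth s xs)) (L (S0 - xs!s)))"
      unfolding sm_def by (simp add: mult.assoc)
    also have "\<dots> = S (c * CC q (remove_nth s xs)) (L (xs!s) * L (S0 - xs!s))" by simp
    also have "\<dots> = S (cf s / dd) (L S0) - S (cf s * q powi (-2 * xs!s) / dd) (K * (K * L S0))"
      unfolding LL by (simp add: sm_diff cf_def c_def)
    finally show ?thesis by (simp only: IH c_def)
  qed
  have "qbr (Suc d) emb q L xs = (\<Sum>s<n. S (cf s / dd) (L S0) - S (cf s * q powi (-2 * xs!s) / dd) (K * (K * L S0)))"
    by (simp add: n_def[symmetric] S0_def[symmetric] tm)
  also have "\<dots> = S ((\<Sum>s<n. cf s) / dd) (L S0) - S ((\<Sum>s<n. cf s * q powi (-2 * xs!s)) / dd) (K * (K * L S0))"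
    by (simp add: sum_sm_diff sum_divide_distrib)
  also have "(\<Sum>s<n. cf s) = dd * CC q xs"
    using step_sums(2)[OF q0 dd0, of xs] n3 by (simp add: cf_def n_def S0_def)
  also have "(\<Sum>s<n. cf s * q powi (-2 * xs!s)) = 0"
    using step_sums(1)[OF q0 dd0, of xs] n3 by (simp add: cf_def n_def S0_def)
  finally show ?case using dd0 by (simp add: S0_def)
qed

end

lemma det_shift:
  assumes q0: "(q::complex) \<noteq> 0" and n: "length xs = n"
  shows "det (mat n n (\<lambda>(r, j). q powi (2 * (int r - int h) * xs ! j)))
         = q powi (- (2 * int h) * sum_list xs) * vdet (map (zq q) xs)"
proof -
  have "mat n n (\<lambda>(r, j). q powi (2 * (int r - int h) * xs ! j))
      = mat n n (\<lambda>(r, j). q powi (- (2 * int h) * xs ! j) * (map (zq q) xs ! j) ^ r)"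
  proof (rule eq_matI)
    fix i j assume i: "i < dim_row (mat n n (\<lambda>(r, j). q powi (- (2 * int h) * xs ! j) * (map (zq q) xs ! j) ^ r))"
      and j: "j < dim_col (mat n n (\<lambda>(r, j). q powi (- (2 * int h) * xs ! j) * (map (zq q) xs ! j) ^ r))"
    have "q powi (- (2 * int h) * xs ! j) * (q powi (2 * xs ! j)) ^ i
        = q powi (- (2 * int h) * xs ! j) * q powi (2 * xs ! j * int i)"
      by (simp only: power_int_power')
    also have "\<dots> = q powi (- (2 * int h) * xs ! j + 2 * xs ! j * int i)"
      by (rule power_int_add[symmetric]) (simp add: q0)
    also have "\<dots> = q powi (2 * (int i - int h) * xs ! j)" by (simp add: algebra_simps)
    finally show "mat n n (\<lambda>(r, j). q powi (2 * (int r - int h) * xs ! j)) $$ (i, j) =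
         mat n n (\<lambda>(r, j). q powi (- (2 * int h) * xs ! j) * (map (zq q) xs ! j) ^ r) $$ (i, j)"
      using i j n by (simp add: zq_def)
  qed auto
  also have "det \<dots> = (\<Prod>j<n. q powi (- (2 * int h) * xs ! j)) * vdet (map (zq q) xs)"
    using det_col_scale[of n "\<lambda>j. q powi (- (2 * int h) * xs ! j)" "\<lambda>r j. (map (zq q) xs ! j) ^ r"] n
    by (simp add: vdet_def)
  also have "(\<Prod>j<n. q powi (- (2 * int h) * xs ! j)) = q powi (- (2 * int h) * sum_list xs)"
    using prod_powi_sum[OF q0, of "- (2 * int h)" xs] n by simp
  finally show ?thesis .
qed

theorem theorem3:
  fixes emb :: "complex \<Rightarrow> 'a::ring_1"
    and q :: complex
    and a ad adi K Kinv :: 'a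
    and n :: nat and xs :: "int list"
  assumes emb: "scalar_embedding emb"
    and q0: "q \<noteq> 0" and q1: "q \<noteq> 1" and qm1: "q \<noteq> -1"
    and K_inv: "K * Kinv = 1" "Kinv * K = 1"
    and ad_inv: "ad * adi = 1" "adi * ad = 1"
    and rel1: "a * ad - emb q * ad * a = Kinv"
    and rel2: "ad * a = emb (1 / (q - 1 / q)) * (K - Kinv)"
    and rel3: "K * a = emb (1 / q) * a * K"
    and rel4: "K * ad = emb q * ad * K"
    and n: "n \<ge> 3" "length xs = n"
  shows "qbracket emb q (Lop K ad adi a) xs =
           emb (sgn4 n / (q - 1 / q) ^ (n - 1)
                * det (mat n n (\<lambda>(r, j). q powi (2 * (int r - int ((n - 1) div 2)) * xs ! j))))
           * Lop K ad adi a (sum_list xs)"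
proof -
  interpret qosc emb q a ad adi K Kinv
    using assms by (unfold_locales) auto
  have "qbracket emb q (Lop K ad adi a) xs = S (CC q xs) (L (sum_list xs))"
    unfolding qbracket_def using main[of xs "n - 2"] n by simp
  also have "CC q xs = sgn4 n / (q - 1 / q) ^ (n - 1)
                * det (mat n n (\<lambda>(r, j). q powi (2 * (int r - int ((n - 1) div 2)) * xs ! j)))"
    unfolding det_shift[OF q0 n(2)] CC_def using n by (simp add: sg_def ee_def)
  finally show ?thesis by (simp add: sm_def)
qed
end
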